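(* Let $d\in\Lambda$ be a root ($d^2=-2$), $d^\perp$ its orthogonal complement in $\Lambda$, and $O^+(\Lambda)_d=\{g\in O^+(\Lambda):g(d)=d\}$. Then the restriction map $O^+(\Lambda)_d\ni g\mapsto g|_{d^\perp}\in O^+(d^\perp)$ is surjective.
   Context: $\Lambda=\mathbb U(2)\oplus\mathbb U\oplus\mathbb E_8(2)$ ($\mathbb U$ hyperbolic plane, $\mathbb E_8$ negative-definite, $(2)$ scaling). For a lattice $L$ of signature $(2,n)$, $\Omega_L$ is $\{[\omega]\in\mathbf P(L\otimes\mathbb C):\omega^2=0,\langle\omega,\bar\omega\rangle>0\}$, which has two components, and $O^+(L)$ is the index-2 subgroup of $O(L)$ preserving each component. The component $\Omega^+_{d^\perp}$ is chosen to be $\{\omega\in\Omega^+_\Lambda:\langle\omega,d\rangle=0\}$. *)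

theory Defs
  imports "HOL-Analysis.Analysis" "HOL-Library.Numeral_Type"
begin

text \<open>The lattice Lambda = U(2) + U + E8(2) is realised as int^12 with coordinates
  0,1 spanning U(2), 2,3 spanning U, and 4..11 the simple roots (Bourbaki order 1..8)
  of the negative definite E8, all scaled by 2. The form below is its Gram form, written
  over an arbitrary commutative ring (used for int and for the complexification).\<close>

definition symt :: "'a::comm_ring_1^12 \<Rightarrow> 'a^12 \<Rightarrow> 12 \<Rightarrow> 12 \<Rightarrow> 'a" where
  "symt x y i j = x$i * y$j + x$j * y$i"

definition lam_form :: "'a::comm_ring_1^12 \<Rightarrow> 'a^12 \<Rightarrow> 'a" where
  "lam_form x y =
     2 * symt x y 0 1
   + symt x y 2 3
   + 2 * ( - 2 * (x$4*y$4 + x$5*y$5 + x$6*y$6 + x$7*y$7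
                  + x$8*y$8 + x$9*y$9 + x$10*y$10 + x$11*y$11)
           + symt x y 4 6 + symt x y 6 7 + symt x y 7 8 + symt x y 8 9
           + symt x y 9 10 + symt x y 10 11 + symt x y 5 7)"

definition cvec :: "int^12 \<Rightarrow> complex^12" where
  "cvec x = (\<chi> i. complex_of_int (x$i))"

definition cconj :: "complex^12 \<Rightarrow> complex^12" where
  "cconj w = (\<chi> i. cnj (w$i))"

text \<open>Affine cone over the period domain Omega_Lambda (its connected components
  correspond bijectively to those of the projective Omega_Lambda).\<close>
definition Omega_Lam :: "(complex^12) set" where
  "Omega_Lam = {w. lam_form w w = 0 \<and> Re (lam_form w (cconj w)) > 0}"

definition dperp :: "int^12 \<Rightarrow> (int^12) set" where
  "dperp d = {x. lam_form x d = 0}"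

text \<open>Cone over Omega_{d-perp}: (d-perp) tensor C = {w. <w,d> = 0}.\<close>
definition Omega_dperp :: "int^12 \<Rightarrow> (complex^12) set" where
  "Omega_dperp d = {w \<in> Omega_Lam. lam_form w (cvec d) = 0}"

definition O_Lam :: "(int^12 \<Rightarrow> int^12) set" where
  "O_Lam = {g. bij g \<and> (\<forall>x y. g (x + y) = g x + g y)
              \<and> (\<forall>x y. lam_form (g x) (g y) = lam_form x y)}"

text \<open>O^+: the complexification (the complex matrix M extending g) preserves each
  connected component of Omega.\<close>
definition Oplus_Lam :: "(int^12 \<Rightarrow> int^12) set" where
  "Oplus_Lam = {g \<in> O_Lam. \<exists>M :: complex^12^12.
       (\<forall>x. M *v cvec x = cvec (g x))
     \<and> (\<forall>w \<in> Omega_Lam. connected_component Omega_Lam w (M *v w))}"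

definition O_dperp :: "int^12 \<Rightarrow> (int^12 \<Rightarrow> int^12) set" where
  "O_dperp d = {h. bij_betw h (dperp d) (dperp d)
              \<and> (\<forall>x\<in>dperp d. \<forall>y\<in>dperp d. h (x + y) = h x + h y)
              \<and> (\<forall>x\<in>dperp d. \<forall>y\<in>dperp d. lam_form (h x) (h y) = lam_form x y)}"

definition Oplus_dperp :: "int^12 \<Rightarrow> (int^12 \<Rightarrow> int^12) set" where
  "Oplus_dperp d = {h \<in> O_dperp d. \<exists>M :: complex^12^12.
       (\<forall>x \<in> dperp d. M *v cvec x = cvec (h x))
     \<and> (\<forall>w \<in> Omega_dperp d. connected_component (Omega_dperp d) w (M *v w))}"

end

theory Submission
  imports Defs
begin


lemma lam_sym: "lam_form x y = lam_form y x"
  by (simp add: lam_form_def symt_def algebra_simps)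

lemma lam_add_left: "lam_form (x + y) z = lam_form x z + lam_form y z"
  by (simp add: lam_form_def symt_def algebra_simps)

lemma lam_add_right: "lam_form z (x + y) = lam_form z x + lam_form z y"
  by (simp add: lam_form_def symt_def algebra_simps)

lemma lam_smult_left: "lam_form (c *s x) z = c * lam_form x z"
  by (simp add: lam_form_def symt_def algebra_simps)

lemma lam_smult_right: "lam_form z (c *s x) = c * lam_form z x"
  by (simp add: lam_form_def symt_def algebra_simps)

lemma lam_neg_left: "lam_form (- x) z = - lam_form x z"
  by (simp add: lam_form_def symt_def algebra_simps)

lemma lam_diff_left: "lam_form (x - y) z = lam_form x z - lam_form y z"
  by (simp add: lam_form_def symt_def algebra_simps)

lemma lam_diff_right: "lam_form z (x - y) = lam_form z x - lam_form z y"
  by (simp add: lam_form_def symt_def algebra_simps)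

lemma lam_zero_left[simp]: "lam_form 0 z = 0"
  by (simp add: lam_form_def symt_def)

lemma lam_zero_right[simp]: "lam_form z 0 = 0"
  by (simp add: lam_form_def symt_def)

lemma lam_sum_left: "lam_form (sum f A) z = (\<Sum>i\<in>A. lam_form (f i) z)"
  by (induction A rule: infinite_finite_induct) (auto simp: lam_add_left)

lemma lam_sum_right: "lam_form z (sum f A) = (\<Sum>i\<in>A. lam_form z (f i))"
  by (induction A rule: infinite_finite_induct) (auto simp: lam_add_right)

lemma lam_cvec: "lam_form (cvec x) (cvec y) = complex_of_int (lam_form x y)"
  by (simp add: lam_form_def symt_def cvec_def)

lemma lam_cconj: "lam_form (cconj x) (cconj y) = cnj (lam_form x y)"
  by (simp add: lam_form_def symt_def cconj_def)

lemma cconj_cconj[simp]: "cconj (cconj x) = x"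
  by (simp add: cconj_def vec_eq_iff)

lemma cconj_cvec[simp]: "cconj (cvec x) = cvec x"
  by (simp add: cconj_def cvec_def vec_eq_iff)

lemma lam_herm_real: "lam_form w (cconj w) = complex_of_real (Re (lam_form w (cconj w)))"
proof -
  have "cnj (lam_form w (cconj w)) = lam_form w (cconj w)"
    by (metis cconj_cconj lam_cconj lam_sym)
  then show ?thesis by (metis Reals_cnj_iff complex_is_Real_iff of_real_Re)
qed



lemma exhaust_12:
  fixes x :: 12
  shows "x = 0 \<or> x = 1 \<or> x = 2 \<or> x = 3 \<or> x = 4 \<or> x = 5 \<or> x = 6 \<or> x = 7 \<or> x = 8 \<or> x = 9 \<or> x = 10 \<or> x = 11"
proof (induct x)
  case (of_int z)
  then have "z = 0 \<or> z = 1 \<or> z = 2 \<or> z = 3 \<or> z = 4 \<or> z = 5 \<or> z = 6 \<or> z = 7 \<or> z = 8 \<or> z = 9 \<or> z = 10 \<or> z = 11" by (simp; presburger)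
  then show ?case by auto
qed

definition EE :: "'a::comm_ring_1^12 \<Rightarrow> 'a^12 \<Rightarrow> 'a" where
  "EE x y = - 2 * (x$4*y$4 + x$5*y$5 + x$6*y$6 + x$7*y$7
                  + x$8*y$8 + x$9*y$9 + x$10*y$10 + x$11*y$11)
           + symt x y 4 6 + symt x y 6 7 + symt x y 7 8 + symt x y 8 9
           + symt x y 9 10 + symt x y 10 11 + symt x y 5 7"

definition EH :: "'a::comm_ring_1^12 \<Rightarrow> 'a" where
  "EH x = - (x$4*x$4 + x$5*x$5 + x$6*x$6 + x$7*x$7
                  + x$8*x$8 + x$9*x$9 + x$10*x$10 + x$11*x$11)
           + x$4*x$6 + x$6*x$7 + x$7*x$8 + x$8*x$9
           + x$9*x$10 + x$10*x$11 + x$5*x$7"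

lemma lam_par: "lam_form x y = x$2*y$3 + x$3*y$2 + 2*(symt x y 0 1 + EE x y)"
  by (simp add: lam_form_def EE_def symt_def algebra_simps)

lemma lam_sq: "lam_form x x = 2*(x$2*x$3) + 4*(x$0*x$1 + EH x)"
  by (simp add: lam_form_def EH_def symt_def algebra_simps)

lemma d_odd:
  fixes d :: "int^12"
  assumes "lam_form d d = -2"
  shows "odd (d$2)" "odd (d$3)"
proof -
  have "odd (d$2*d$3)"
  proof
    assume "even (d$2*d$3)"
    then obtain k where "d$2*d$3 = 2*k" by blast
    with assms lam_sq[of d] have "-2 = 4*k + 4*(d$0*d$1 + EH d)" by simp
    then show False by presburger
  qed
  then show "odd (d$2)" "odd (d$3)" by auto
qed

lemma axis_test:
  fixes x :: "int^12"
  shows "lam_form (axis 0 1) x = 2 * x$1"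
    "lam_form (axis 1 1) x = 2 * x$0"
    "lam_form (axis 2 1) x = x$3"
    "lam_form (axis 3 1) x = x$2"
    "lam_form (axis 4 1) x = 2 * (-2 * x$4 + x$6)"
    "lam_form (axis 5 1) x = 2 * (-2 * x$5 + x$7)"
    "lam_form (axis 6 1) x = 2 * (-2 * x$6 + x$4 + x$7)"
    "lam_form (axis 7 1) x = 2 * (-2 * x$7 + x$6 + x$8 + x$5)"
    "lam_form (axis 8 1) x = 2 * (-2 * x$8 + x$7 + x$9)"
    "lam_form (axis 9 1) x = 2 * (-2 * x$9 + x$8 + x$10)"
    "lam_form (axis 10 1) x = 2 * (-2 * x$10 + x$9 + x$11)"
    "lam_form (axis 11 1) x = 2 * (-2 * x$11 + x$10)"
  by (simp_all add: lam_form_def symt_def axis_def algebra_simps)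



definition vv :: "int^12 \<Rightarrow> int^12 \<Rightarrow> int^12" where
  "vv d x = 2 *s x + lam_form x d *s d"

definition extd :: "int^12 \<Rightarrow> (int^12 \<Rightarrow> int^12) \<Rightarrow> int^12 \<Rightarrow> int^12" where
  "extd d h x = (\<chi> i. (h (vv d x) - lam_form x d *s d) $ i div 2)"

lemma smult2_cancel:
  fixes a b :: "int^12"
  assumes "2 *s a = 2 *s b" shows "a = b"
  using assms by (simp add: vec_eq_iff)

lemma two_smult: "(2::int) *s x = x + x"
  by (simp add: vec_eq_iff algebra_simps)

lemma vv_in: assumes "lam_form d d = -2" shows "vv d x \<in> dperp d"
  using assms by (simp add: vv_def dperp_def lam_add_left lam_smult_left)

lemma O_dperpD:
  assumes "h \<in> O_dperp d"
  shows "\<And>x. x \<in> dperp d \<Longrightarrow> h x \<in> dperp d"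
    "\<And>x y. x \<in> dperp d \<Longrightarrow> y \<in> dperp d \<Longrightarrow> h (x + y) = h x + h y"
    "\<And>x y. x \<in> dperp d \<Longrightarrow> y \<in> dperp d \<Longrightarrow> lam_form (h x) (h y) = lam_form x y"
    "\<And>y. y \<in> dperp d \<Longrightarrow> \<exists>x \<in> dperp d. h x = y"
  using assms unfolding O_dperp_def bij_betw_def by auto (metis imageE)

lemma zero_in_dperp[simp]: "0 \<in> dperp d"
  by (simp add: dperp_def)

lemma add_in_dperp: "x \<in> dperp d \<Longrightarrow> y \<in> dperp d \<Longrightarrow> x + y \<in> dperp d"
  by (simp add: dperp_def lam_add_left)

lemma h_zero: assumes "h \<in> O_dperp d" shows "h 0 = 0"
proof -
  have "h (0 + 0) = h 0 + h 0" by (rule O_dperpD(2)[OF assms]) simp_all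
  then show ?thesis by simp
qed

lemma test_even:
  fixes d \<delta> :: "int^12"
  assumes dd: "lam_form d d = -2" and dl: "\<delta> \<in> dperp d"
    and four: "\<And>u. u \<in> dperp d \<Longrightarrow> 4 dvd lam_form u \<delta>"
  shows "even (\<delta>$i)"
proof -
  have d0: "lam_form d \<delta> = 0" using dl by (simp add: dperp_def lam_sym)
  have A: "2 dvd lam_form x \<delta>" for x
  proof -
    have "4 dvd lam_form (vv d x) \<delta>" using four vv_in[OF dd] by blast
    moreover have "lam_form (vv d x) \<delta> = 2 * lam_form x \<delta>"
      by (simp add: vv_def lam_add_left lam_smult_left d0)
    ultimately show ?thesis by presburger
  qed
  have B: "4 dvd lam_form x \<delta>" if "even (lam_form x d)" for x
  proof -
    define u where "u = x + (lam_form x d div 2) *s d"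
    have "lam_form u d = 0" using that dd
      by (simp add: u_def lam_add_left lam_smult_left)
    then have "u \<in> dperp d" by (simp add: dperp_def)
    then have "4 dvd lam_form u \<delta>" using four by blast
    moreover have "lam_form u \<delta> = lam_form x \<delta>"
      by (simp add: u_def lam_add_left lam_smult_left d0)
    ultimately show ?thesis by simp
  qed
  note ax = axis_test
  have "2 dvd \<delta>$3" "2 dvd \<delta>$2" using A[of "axis 2 1"] A[of "axis 3 1"] by (simp_all add: ax)
  moreover have "4 dvd 2 * \<delta>$1" "4 dvd 2 * \<delta>$0"
    "4 dvd 2 * (-2 * \<delta>$4 + \<delta>$6)"
    "4 dvd 2 * (-2 * \<delta>$5 + \<delta>$7)"
    "4 dvd 2 * (-2 * \<delta>$6 + \<delta>$4 + \<delta>$7)"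
    "4 dvd 2 * (-2 * \<delta>$7 + \<delta>$6 + \<delta>$8 + \<delta>$5)"
    "4 dvd 2 * (-2 * \<delta>$8 + \<delta>$7 + \<delta>$9)"
    "4 dvd 2 * (-2 * \<delta>$9 + \<delta>$8 + \<delta>$10)"
    "4 dvd 2 * (-2 * \<delta>$10 + \<delta>$9 + \<delta>$11)"
    "4 dvd 2 * (-2 * \<delta>$11 + \<delta>$10)"
    using B[of "axis 0 1"] B[of "axis 1 1"] B[of "axis 4 1"] B[of "axis 5 1"]
      B[of "axis 6 1"] B[of "axis 7 1"] B[of "axis 8 1"] B[of "axis 9 1"]
      B[of "axis 10 1"] B[of "axis 11 1"]
    by (simp_all add: ax)
  ultimately have "even (\<delta>$0) \<and> even (\<delta>$1) \<and> even (\<delta>$2) \<and> even (\<delta>$3) \<and> even (\<delta>$4) \<and> even (\<delta>$5)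
     \<and> even (\<delta>$6) \<and> even (\<delta>$7) \<and> even (\<delta>$8) \<and> even (\<delta>$9) \<and> even (\<delta>$10) \<and> even (\<delta>$11)"
    by presburger
  then show ?thesis using exhaust_12[of i] by auto
qed



lemma H1: "(n::int) = a + 2*q \<Longrightarrow> n = 0 \<Longrightarrow> even a" by presburger
lemma H2: "(n::int) = a + 2*q \<Longrightarrow> odd n \<Longrightarrow> odd a" by presburger
lemma H3: "(D::int) = 2*a + 4*b - 4*c \<Longrightarrow> even a \<Longrightarrow> 4 dvd D" by presburger

lemma P_odd:
  fixes d x u :: "int^12"
  assumes dd: "lam_form d d = -2" and n: "odd (lam_form x d)" and u: "u \<in> dperp d"
  shows "4 dvd (lam_form u u - lam_form u (vv d x))"
proof -
  have ud: "lam_form u d = 0" using u by (simp add: dperp_def)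
  have e1: "lam_form u (vv d x) = 2 * lam_form u x"
    using ud by (simp add: vv_def lam_add_right lam_smult_right)
  have o2: "odd (d$2)" and o3: "odd (d$3)" using d_odd[OF dd] by auto
  have "even (u$2*d$3 + u$3*d$2)" using H1[OF lam_par[of u d] ud] .
  then have eu: "even (u$2) = even (u$3)" using o2 o3 by auto
  have "odd (x$2*d$3 + x$3*d$2)" using H2[OF lam_par[of x d] n] .
  then have ex: "even (x$2) \<noteq> even (x$3)" using o2 o3 by auto
  have ev: "even (u$2*u$3 - u$2*x$3 - u$3*x$2)" using eu ex by auto
  have "lam_form u u - lam_form u (vv d x)
      = 2*(u$2*u$3 - u$2*x$3 - u$3*x$2) + 4*(u$0*u$1 + EH u) - 4*(symt u x 0 1 + EE u x)"
    unfolding e1 lam_sq[of u] lam_par[of u x] by (simp add: algebra_simps)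
  then show ?thesis using H3 ev by blast
qed

lemma key_even:
  fixes d x :: "int^12"
  assumes dd: "lam_form d d = -2" and h: "h \<in> O_dperp d"
  shows "even ((h (vv d x) - lam_form x d *s d) $ i)"
proof (cases "even (lam_form x d)")
  case True
  define w where "w = x + (lam_form x d div 2) *s d"
  have "lam_form w d = 0" using True dd
    by (simp add: w_def lam_add_left lam_smult_left)
  then have wL: "w \<in> dperp d" by (simp add: dperp_def)
  have "vv d x = w + w" using True
    by (simp add: vv_def w_def vec_eq_iff algebra_simps)
  then have "h (vv d x) = h w + h w" using O_dperpD(2)[OF h wL wL] by simp
  then have "(h (vv d x) - lam_form x d *s d) $ i = 2 * ((h w)$i - (lam_form x d div 2) * d$i)"
    using True by (simp add: algebra_simps)
  then show ?thesis by simp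
next
  case False
  have vL: "vv d x \<in> dperp d" by (rule vv_in[OF dd])
  define \<delta> where "\<delta> = h (vv d x) - vv d x"
  have hvL: "h (vv d x) \<in> dperp d" using O_dperpD(1)[OF h vL] .
  have dL: "\<delta> \<in> dperp d" using vL hvL by (simp add: \<delta>_def dperp_def lam_diff_left)
  have four: "4 dvd lam_form u \<delta>" if uL: "u \<in> dperp d" for u
  proof -
    obtain u' where u'L: "u' \<in> dperp d" and hu': "h u' = u" using O_dperpD(4)[OF h uL] by blast
    have "lam_form u \<delta> = lam_form u' (vv d x) - lam_form u (vv d x)"
      using O_dperpD(3)[OF h u'L vL] hu' by (simp add: \<delta>_def lam_diff_right)
    also have "\<dots> = (lam_form u u - lam_form u (vv d x)) - (lam_form u' u' - lam_form u' (vv d x))"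
      using O_dperpD(3)[OF h u'L u'L] hu' by simp
    finally show ?thesis using P_odd[OF dd False uL] P_odd[OF dd False u'L] by (metis dvd_diff)
  qed
  have "even (\<delta>$i)" by (rule test_even[OF dd dL four])
  moreover have "(h (vv d x) - lam_form x d *s d) $ i = \<delta>$i + 2 * x$i"
    by (simp add: \<delta>_def vv_def)
  ultimately show ?thesis by simp
qed

lemma ext2:
  assumes dd: "lam_form d d = -2" and h: "h \<in> O_dperp d"
  shows "2 *s extd d h x = h (vv d x) - lam_form x d *s d"
  using key_even[OF dd h] by (simp add: extd_def vec_eq_iff)

lemma ext_d:
  assumes dd: "lam_form d d = -2" and h: "h \<in> O_dperp d"
  shows "extd d h d = d"
proof -
  have "vv d d = 0" using dd by (simp add: vv_def vec_eq_iff)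
  then have "h (vv d d) = 0" using h_zero[OF h] by simp
  then have "2 *s extd d h d = 2 *s d" using ext2[OF dd h, of d] dd
    by (simp add: vec_eq_iff)
  then show ?thesis by (rule smult2_cancel)
qed

lemma ext_L:
  assumes dd: "lam_form d d = -2" and h: "h \<in> O_dperp d" and x: "x \<in> dperp d"
  shows "extd d h x = h x"
proof -
  have n: "lam_form x d = 0" using x by (simp add: dperp_def)
  have v: "vv d x = x + x" unfolding vv_def n two_smult by (simp add: vec_eq_iff)
  have "2 *s extd d h x = h (x + x)" using ext2[OF dd h, of x] unfolding n v
    by (simp add: vec_eq_iff)
  also have "\<dots> = h x + h x" using O_dperpD(2)[OF h x x] .
  also have "\<dots> = 2 *s h x" by (simp only: two_smult)
  finally show ?thesis by (rule smult2_cancel)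
qed

lemma ext_add:
  assumes dd: "lam_form d d = -2" and h: "h \<in> O_dperp d"
  shows "extd d h (x + y) = extd d h x + extd d h y"
proof -
  have v: "vv d (x + y) = vv d x + vv d y"
    unfolding vv_def lam_add_left by (simp add: vec_eq_iff distrib_left distrib_right)
  have hv: "h (vv d (x + y)) = h (vv d x) + h (vv d y)"
    unfolding v by (rule O_dperpD(2)[OF h vv_in[OF dd] vv_in[OF dd]])
  have "2 *s extd d h (x + y) = (h (vv d x) - lam_form x d *s d) + (h (vv d y) - lam_form y d *s d)"
    unfolding ext2[OF dd h] hv lam_add_left by (simp add: vec_eq_iff distrib_right)
  also have "\<dots> = 2 *s (extd d h x + extd d h y)"
    unfolding ext2[OF dd h, symmetric] by (simp add: vec_eq_iff distrib_left)
  finally show ?thesis by (rule smult2_cancel)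
qed

lemma LX: "lam_form (A - n *s d) (B - m *s d) = lam_form A B - m*lam_form A d - n*lam_form d B + n*m*lam_form d d"
  by (simp add: lam_diff_left lam_diff_right lam_smult_left lam_smult_right algebra_simps)

lemma LY: "lam_form (2 *s x + n *s d) (2 *s y + m *s d) = 4*lam_form x y + 2*m*lam_form x d + 2*n*lam_form d y + n*m*lam_form d d"
  by (simp add: lam_add_left lam_add_right lam_smult_left lam_smult_right algebra_simps)

lemma ext_iso:
  assumes dd: "lam_form d d = -2" and h: "h \<in> O_dperp d"
  shows "lam_form (extd d h x) (extd d h y) = lam_form x y"
proof -
  have L1: "lam_form (h (vv d x)) d = 0" for x
    using O_dperpD(1)[OF h vv_in[OF dd]] by (simp add: dperp_def)
  have L2: "lam_form d (h (vv d x)) = 0" for x using L1 by (simp add: lam_sym)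
  have I: "lam_form (h (vv d x)) (h (vv d y)) = lam_form (vv d x) (vv d y)"
    using O_dperpD(3)[OF h vv_in[OF dd] vv_in[OF dd]] .
  have V: "lam_form (vv d x) (vv d y) = 4 * lam_form x y + 2 * lam_form x d * lam_form y d"
    unfolding vv_def LY dd lam_sym[of d y] by (simp add: algebra_simps)
  have "4 * lam_form (extd d h x) (extd d h y) = lam_form (2 *s extd d h x) (2 *s extd d h y)"
    by (simp add: lam_smult_left lam_smult_right)
  also have "\<dots> = 4 * lam_form x y"
    unfolding ext2[OF dd h] LX L1 L2 I V dd by (simp add: algebra_simps)
  finally show ?thesis by simp
qed



lemma additive_smult:
  fixes f :: "int^12 \<Rightarrow> int^12"
  assumes add: "\<And>x y. f (x + y) = f x + f y"
  shows "f (k *s x) = k *s f x"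
proof -
  have f0: "f 0 = 0" using add[of 0 0] by simp
  have nat: "f (int n *s x) = int n *s f x" for n
  proof (induction n)
    case 0 then show ?case using f0 by (simp add: vec_eq_iff)
  next
    case (Suc n)
    have "int (Suc n) *s x = int n *s x + x" by (simp add: vec_eq_iff algebra_simps)
    then have "f (int (Suc n) *s x) = int n *s f x + f x" using add Suc by simp
    then show ?case by (simp add: vec_eq_iff algebra_simps)
  qed
  have neg: "f (- z) = - f z" for z
    using add[of z "- z"] f0 by (simp add: eq_neg_iff_add_eq_0 add.commute)
  show ?thesis
  proof (cases "k \<ge> 0")
    case True then show ?thesis using nat[of "nat k"] by simp
  next
    case False
    have e: "int (nat (- k)) = - k" using False by simp
    have "f ((- k) *s x) = (- k) *s f x" using nat[of "nat (- k)"] unfolding e .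
    moreover have "k *s x = - ((- k) *s x)" by (simp add: vec_eq_iff)
    ultimately have "f (k *s x) = - ((- k) *s f x)" using neg by simp
    then show ?thesis by (simp add: vec_eq_iff)
  qed
qed

lemma inv_O_dperp:
  assumes h: "h \<in> O_dperp d"
  shows "inv_into (dperp d) h \<in> O_dperp d"
    "\<And>u. u \<in> dperp d \<Longrightarrow> inv_into (dperp d) h (h u) = u"
    "\<And>u. u \<in> dperp d \<Longrightarrow> h (inv_into (dperp d) h u) = u"
proof -
  let ?L = "dperp d" and ?g = "inv_into (dperp d) h"
  have b: "bij_betw h ?L ?L" using h by (simp add: O_dperp_def)
  have bg: "bij_betw ?g ?L ?L" by (rule bij_betw_inv_into[OF b])
  show inv1: "\<And>u. u \<in> ?L \<Longrightarrow> ?g (h u) = u" using b by (simp add: bij_betw_inv_into_left)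
  show inv2: "\<And>u. u \<in> ?L \<Longrightarrow> h (?g u) = u" using b by (simp add: bij_betw_inv_into_right)
  have gL: "\<And>u. u \<in> ?L \<Longrightarrow> ?g u \<in> ?L" using bg by (simp add: bij_betw_apply)
  have "?g (x + y) = ?g x + ?g y" if "x \<in> ?L" "y \<in> ?L" for x y
  proof -
    have "h (?g x + ?g y) = x + y" using O_dperpD(2)[OF h gL gL] that inv2 by simp
    then have "?g (x + y) = ?g (h (?g x + ?g y))" by simp
    also have "\<dots> = ?g x + ?g y" using inv1 add_in_dperp gL that by simp
    finally show ?thesis .
  qed
  moreover have "lam_form (?g x) (?g y) = lam_form x y" if "x \<in> ?L" "y \<in> ?L" for x y
    using O_dperpD(3)[OF h gL gL] that inv2 by metis
  ultimately show "?g \<in> O_dperp d" using bg by (simp add: O_dperp_def)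
qed

lemma ext_comp:
  assumes dd: "lam_form d d = -2" and h: "h \<in> O_dperp d" and h': "h' \<in> O_dperp d"
    and inv: "\<And>u. u \<in> dperp d \<Longrightarrow> h' (h u) = u"
  shows "extd d h' (extd d h x) = x"
proof -
  let ?F = "\<lambda>x. extd d h' (extd d h x)"
  have add: "?F (x + y) = ?F x + ?F y" for x y by (simp add: ext_add[OF dd h] ext_add[OF dd h'])
  have Fd: "?F d = d" by (simp add: ext_d[OF dd h] ext_d[OF dd h'])
  have FL: "?F u = u" if "u \<in> dperp d" for u
    using that by (simp add: ext_L[OF dd h] ext_L[OF dd h'] O_dperpD(1)[OF h] inv)
  have "?F (vv d x) = vv d x" by (rule FL[OF vv_in[OF dd]])
  moreover have "?F (vv d x) = 2 *s ?F x + lam_form x d *s d"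
    unfolding vv_def add additive_smult[OF add] Fd ..
  ultimately have "2 *s ?F x = 2 *s x" unfolding vv_def by simp
  then show ?thesis by (rule smult2_cancel)
qed

lemma ext_O_Lam:
  assumes dd: "lam_form d d = -2" and h: "h \<in> O_dperp d"
  shows "extd d h \<in> O_Lam"
proof -
  let ?h' = "inv_into (dperp d) h"
  note I = inv_O_dperp[OF h]
  have c1: "extd d ?h' \<circ> extd d h = id"
    by (rule fun_eq_iff[THEN iffD2]) (simp add: ext_comp[OF dd h I(1) I(2)])
  have c2: "extd d h \<circ> extd d ?h' = id"
    by (rule fun_eq_iff[THEN iffD2]) (simp add: ext_comp[OF dd I(1) h I(3)])
  have "bij (extd d h)" using o_bij[OF c1 c2] .
  then show ?thesis by (simp add: O_Lam_def ext_add[OF dd h] ext_iso[OF dd h])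
qed



lemma mv_lin:
  fixes M :: "complex^12^12"
  shows "M *v (\<Sum>j\<in>A. c j *s X j) = (\<Sum>j\<in>A. c j *s (M *v X j))"
proof -
  have "(M *v (\<Sum>j\<in>A. c j *s X j)) $ i = (\<Sum>j\<in>A. c j *s (M *v X j)) $ i" for i
  proof -
    have "(M *v (\<Sum>j\<in>A. c j *s X j)) $ i = (\<Sum>k\<in>UNIV. \<Sum>j\<in>A. M$i$k * (c j * X j $ k))"
      by (simp add: matrix_vector_mult_def sum_component sum_distrib_left)
    also have "\<dots> = (\<Sum>j\<in>A. \<Sum>k\<in>UNIV. M$i$k * (c j * X j $ k))" by (rule sum.swap)
    also have "\<dots> = (\<Sum>j\<in>A. c j *s (M *v X j)) $ i"
      by (simp add: matrix_vector_mult_def sum_component sum_distrib_left mult.left_commute)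
    finally show ?thesis .
  qed
  then show ?thesis by (simp add: vec_eq_iff)
qed

lemma mv_smult:
  fixes M :: "complex^12^12"
  shows "M *v (c *s X) = c *s (M *v X)"
  by (simp add: vec_eq_iff matrix_vector_mult_def sum_distrib_left algebra_simps)

lemma int_basis: "(x::int^12) = (\<Sum>j\<in>UNIV. x$j *s axis j 1)"
  by (simp add: vec_eq_iff axis_def if_distrib sum.If_cases)

lemma cx_basis: "(u::complex^12) = (\<Sum>j\<in>UNIV. u$j *s cvec (axis j 1))"
  by (simp add: vec_eq_iff axis_def cvec_def if_distrib sum.If_cases)

lemma additive_sum:
  fixes f :: "int^12 \<Rightarrow> int^12"
  assumes add: "\<And>x y. f (x + y) = f x + f y"
  shows "f (sum g A) = (\<Sum>j\<in>A. f (g j))"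
proof -
  have f0: "f 0 = 0" using add[of 0 0] by simp
  show ?thesis by (induction A rule: infinite_finite_induct) (simp_all add: f0 add)
qed

definition matC :: "(int^12 \<Rightarrow> int^12) \<Rightarrow> complex^12^12" where
  "matC g = (\<chi> i j. complex_of_int (g (axis j 1) $ i))"

lemma matC_cvec:
  fixes g :: "int^12 \<Rightarrow> int^12"
  assumes add: "\<And>x y. g (x + y) = g x + g y"
  shows "matC g *v cvec x = cvec (g x)"
proof -
  have "g x = (\<Sum>j\<in>UNIV. x$j *s g (axis j 1))"
    by (subst int_basis) (simp add: additive_sum[OF add] additive_smult[OF add])
  then have gx: "g x $ i = (\<Sum>j\<in>UNIV. x$j * g (axis j 1) $ i)" for i
    by (simp add: sum_component)
  show ?thesis
    by (simp add: vec_eq_iff matC_def matrix_vector_mult_def cvec_def gx mult.commute)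
qed

lemma lam_expand:
  "lam_form (\<Sum>i\<in>UNIV. u$i *s a i) (\<Sum>j\<in>UNIV. v$j *s b j)
     = (\<Sum>i\<in>UNIV. \<Sum>j\<in>UNIV. u$i * v$j * lam_form (a i) (b j))"
  apply (simp add: lam_sum_left lam_sum_right lam_smult_left lam_smult_right sum_distrib_left)
  apply (subst sum.swap)
  apply (rule sum.cong[OF refl], rule sum.cong[OF refl])
  apply (simp add: algebra_simps)
  done

lemma col_M:
  fixes M :: "complex^12^12"
  assumes M: "\<And>x. M *v cvec x = cvec (g x)"
  shows "M $ i $ j = complex_of_int (g (axis j 1) $ i)"
proof -
  have "(M *v cvec (axis j 1)) $ i = M $ i $ j"
    by (simp add: matrix_vector_mult_def cvec_def axis_def if_distrib sum.If_cases)
  then show ?thesis using M[of "axis j 1"] by (simp add: cvec_def)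
qed

lemma mv_basis:
  fixes M :: "complex^12^12"
  assumes M: "\<And>x. M *v cvec x = cvec (g x)"
  shows "M *v u = (\<Sum>j\<in>UNIV. u$j *s cvec (g (axis j 1)))"
  by (subst cx_basis) (simp add: mv_lin M)

lemma isoC:
  fixes M :: "complex^12^12"
  assumes M: "\<And>x. M *v cvec x = cvec (g x)"
    and iso: "\<And>x y. lam_form (g x) (g y) = lam_form x y"
  shows "lam_form (M *v u) (M *v v) = lam_form u v"
proof -
  have "lam_form (M *v u) (M *v v) = (\<Sum>i\<in>UNIV. \<Sum>j\<in>UNIV. u$i * v$j * lam_form (cvec (axis i 1)) (cvec (axis j 1)))"
    unfolding mv_basis[OF M] lam_expand by (simp add: lam_cvec iso)
  also have "\<dots> = lam_form u v"
    by (subst (3) cx_basis, subst (4) cx_basis, simp only: lam_expand)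
  finally show ?thesis .
qed

lemma conjC:
  fixes M :: "complex^12^12"
  assumes M: "\<And>x. M *v cvec x = cvec (g x)"
  shows "cconj (M *v u) = M *v cconj u"
  by (simp add: vec_eq_iff cconj_def matrix_vector_mult_def col_M[OF M])

lemma M_Omega:
  fixes M :: "complex^12^12"
  assumes M: "\<And>x. M *v cvec x = cvec (g x)"
    and iso: "\<And>x y. lam_form (g x) (g y) = lam_form x y"
    and w: "w \<in> Omega_Lam"
  shows "M *v w \<in> Omega_Lam"
  using w by (simp add: Omega_Lam_def isoC[OF M iso] conjC[OF M])



lemma cconj_diff: "cconj (a - b) = cconj a - cconj b"
  by (simp add: cconj_def vec_eq_iff)
lemma cconj_add: "cconj (a + b) = cconj a + cconj b"
  by (simp add: cconj_def vec_eq_iff)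
lemma cconj_smult: "cconj (c *s a) = cnj c *s cconj a"
  by (simp add: cconj_def vec_eq_iff)

lemma LZ: "lam_form (a - c *s b) (a' - c' *s b') = lam_form a a' - c' * lam_form a b' - c * lam_form b a' + c * c' * lam_form b b'"
  by (simp add: lam_diff_left lam_diff_right lam_smult_left lam_smult_right algebra_simps)

definition Bz :: "complex^12 \<Rightarrow> real" where
  "Bz z = Re (lam_form z (cconj z))"
definition Rz :: "complex^12 \<Rightarrow> real" where
  "Rz z = sqrt ((Bz z)^2 - (cmod (lam_form z z))^2)"
definition kap :: "complex^12 \<Rightarrow> complex" where
  "kap z = lam_form z z / complex_of_real (Bz z + Rz z)"
definition corr :: "complex^12 \<Rightarrow> complex^12" where
  "corr z = z - kap z *s cconj z"

lemma G1: "(A::complex) = K * D \<Longrightarrow> (A - K*B - K*B + K*K*C) * D^2 = A * (D^2 - 2*B*D + A*C)"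
  by (simp add: algebra_simps power2_eq_square)

lemma G2: "(A::complex) = K * D \<Longrightarrow> C = cK * D \<Longrightarrow> (B - cK*A - K*C + K*cK*B) * D^2 = B*D^2 - 2*(A*C)*D + (A*C)*B"
  by (simp add: algebra_simps power2_eq_square)

lemma corr_alg:
  fixes A B' K :: complex and b r :: real
  assumes B': "B' = complex_of_real b" and r2: "r^2 = b^2 - (cmod A)^2" and r: "r > 0" and b: "b > 0"
    and K: "K = A / complex_of_real (b + r)"
  shows "A - K * B' - K * B' + K * K * cnj A = 0"
    and "B' - cnj K * A - K * cnj A + K * cnj K * B' = complex_of_real (2 * r^2 / (b + r))"
proof -
  define D where "D = complex_of_real (b + r)"
  have "b + r \<noteq> 0" using r b by simp
  then have D0: "D \<noteq> 0" unfolding D_def by (metis of_real_eq_0_iff)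
  have N: "A * cnj A = complex_of_real (b^2 - r^2)"
    using r2 complex_norm_square[of A] by simp
  have KD: "A = K * D" using D0 K unfolding D_def by simp
  have cKD: "cnj A = cnj K * D" using KD unfolding D_def by simp
  have "(A - K * B' - K * B' + K * K * cnj A) * D^2 = A * (D^2 - 2*B'*D + A*cnj A)"
    by (rule G1[OF KD])
  also have "D^2 - 2*B'*D + A*cnj A = complex_of_real ((b+r)^2 - 2*b*(b+r) + (b^2 - r^2))"
    unfolding N D_def B' by simp
  also have "(b+r)^2 - 2*b*(b+r) + (b^2 - r^2) = 0" by (simp add: algebra_simps power2_eq_square)
  finally show "A - K * B' - K * B' + K * K * cnj A = 0" using D0 by simp
  have "(B' - cnj K * A - K * cnj A + K * cnj K * B') * D^2 = B'*D^2 - 2*(A*cnj A)*D + (A*cnj A)*B'"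
    by (rule G2[OF KD cKD])
  also have "\<dots> = complex_of_real (b*(b+r)^2 - 2*(b^2-r^2)*(b+r) + (b^2-r^2)*b)"
    unfolding N D_def B' by simp
  also have "b*(b+r)^2 - 2*(b^2-r^2)*(b+r) + (b^2-r^2)*b = (2 * r^2 / (b + r)) * (b+r)^2"
    using \<open>b + r \<noteq> 0\<close> by (simp add: field_simps power2_eq_square)
  also have "complex_of_real \<dots> = complex_of_real (2 * r^2 / (b + r)) * D^2"
    unfolding D_def by simp
  finally have E: "(B' - cnj K * A - K * cnj A + K * cnj K * B') * D^2 = complex_of_real (2 * r^2 / (b + r)) * D^2" .
  show "B' - cnj K * A - K * cnj A + K * cnj K * B' = complex_of_real (2 * r^2 / (b + r))"
    using E D0 by (metis mult_cancel_right power_not_zero)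
qed

lemma corr_Omega:
  fixes z :: "complex^12"
  assumes lt: "cmod (lam_form z z) < Bz z"
  shows "corr z \<in> Omega_Lam"
proof -
  let ?A = "lam_form z z" and ?B' = "lam_form z (cconj z)" and ?b = "Bz z" and ?r = "Rz z"
  have B': "?B' = complex_of_real ?b" unfolding Bz_def by (rule lam_herm_real)
  have b: "?b > 0" using lt by (meson norm_ge_zero le_less_trans)
  have pos: "?b^2 - (cmod ?A)^2 > 0" using lt b
    by (simp add: power_strict_mono)
  have r: "?r > 0" unfolding Rz_def using pos by simp
  have r2: "?r^2 = ?b^2 - (cmod ?A)^2" unfolding Rz_def using pos by simp
  have K: "kap z = ?A / complex_of_real (?b + ?r)" by (simp add: kap_def)
  have sym1: "lam_form (cconj z) z = ?B'" by (simp add: lam_sym)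
  have cc: "lam_form (cconj z) (cconj z) = cnj ?A" by (simp add: lam_cconj)
  have cp: "cconj (corr z) = cconj z - cnj (kap z) *s z"
    by (simp add: corr_def cconj_diff cconj_smult)
  have e1: "lam_form (corr z) (corr z) = ?A - kap z * ?B' - kap z * ?B' + kap z * kap z * cnj ?A"
    unfolding corr_def LZ sym1 cc by (simp add: algebra_simps)
  have e2: "lam_form (corr z) (cconj (corr z)) = ?B' - cnj (kap z) * ?A - kap z * cnj ?A + kap z * cnj (kap z) * ?B'"
    unfolding cp unfolding corr_def LZ sym1 cc
    by (simp add: lam_cconj lam_sym algebra_simps)
  note ca = corr_alg[OF B' r2 r b K]
  have "lam_form (corr z) (corr z) = 0" using e1 ca(1) by simp
  moreover have "Re (lam_form (corr z) (cconj (corr z))) > 0"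
    unfolding e2 ca(2) using r b by simp
  ultimately show ?thesis by (simp add: Omega_Lam_def)
qed



lemma M_eq_perp:
  fixes M M' :: "complex^12^12"
  assumes dd: "lam_form d d = -2"
    and M: "\<forall>x \<in> dperp d. M *v cvec x = cvec (h x)"
    and M': "\<forall>x \<in> dperp d. M' *v cvec x = cvec (h x)"
    and w: "lam_form w (cvec d) = 0"
  shows "M *v w = M' *v w"
proof -
  define S where "S = (\<Sum>j\<in>UNIV. w$j *s cvec (vv d (axis j 1)))"
  have cv: "cvec (vv d x) = 2 *s cvec x + complex_of_int (lam_form x d) *s cvec d" for x
    by (simp add: vec_eq_iff cvec_def vv_def)
  have wd: "(\<Sum>j\<in>UNIV. w$j * complex_of_int (lam_form (axis j 1) d)) = 0"
  proof -
    have "lam_form w (cvec d) = (\<Sum>j\<in>UNIV. w$j * lam_form (cvec (axis j 1)) (cvec d))"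
      by (subst cx_basis) (simp add: lam_sum_left lam_smult_left)
    then show ?thesis using w by (simp add: lam_cvec)
  qed
  have "S $ i = (2 *s w) $ i" for i
  proof -
    have "S $ i = 2 * (\<Sum>j\<in>UNIV. w$j * cvec (axis j 1) $ i) + (\<Sum>j\<in>UNIV. w$j * complex_of_int (lam_form (axis j 1) d)) * cvec d $ i"
      unfolding S_def cv by (simp add: sum_component sum_distrib_left sum_distrib_right sum.distrib algebra_simps)
    also have "(\<Sum>j\<in>UNIV. w$j * cvec (axis j 1) $ i) = w $ i"
      by (subst (2) cx_basis) (simp add: sum_component)
    finally show ?thesis unfolding wd by simp
  qed
  then have S2: "S = 2 *s w" by (simp add: vec_eq_iff)
  have "M *v S = M' *v S"
    unfolding S_def mv_lin using M M' vv_in[OF dd] by simp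
  then have "2 *s (M *v w) = 2 *s (M' *v w)" unfolding S2 mv_smult .
  then show ?thesis by (simp add: vec_eq_iff)
qed

lemma cont_lam:
  fixes f g :: "real \<Rightarrow> complex^12"
  assumes "continuous_on S f" "continuous_on S g"
  shows "continuous_on S (\<lambda>s. lam_form (f s) (g s))"
  unfolding lam_form_def symt_def using assms by (intro continuous_intros)

lemma cont_cconj:
  fixes f :: "real \<Rightarrow> complex^12"
  assumes "continuous_on S f"
  shows "continuous_on S (\<lambda>s. cconj (f s))"
  unfolding cconj_def using assms by (intro continuous_intros)

lemma cont_smult:
  fixes f :: "real \<Rightarrow> complex^12" and c :: "real \<Rightarrow> complex"
  assumes "continuous_on S c" "continuous_on S f"
  shows "continuous_on S (\<lambda>s. c s *s f s)"
  unfolding vector_scalar_mult_def using assms by (intro continuous_intros)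

lemma cont_mv:
  fixes f :: "real \<Rightarrow> complex^12" and M :: "complex^12^12"
  assumes "continuous_on S f"
  shows "continuous_on S (\<lambda>s. M *v f s)"
  unfolding matrix_vector_mult_def using assms by (intro continuous_intros)

lemma Bz_pos_Rz: "cmod (lam_form z z) < Bz z \<Longrightarrow> complex_of_real (Bz z + Rz z) \<noteq> 0"
proof -
  assume lt: "cmod (lam_form z z) < Bz z"
  then have b: "Bz z > 0" by (meson norm_ge_zero le_less_trans)
  have "(cmod (lam_form z z))^2 < (Bz z)^2" using lt by (simp add: power_strict_mono)
  then have "Rz z \<ge> 0" unfolding Rz_def by simp
  then have "Bz z + Rz z \<noteq> 0" using b by simp
  then show ?thesis by (metis of_real_eq_0_iff)
qed

lemma cont_corr:
  fixes f :: "real \<Rightarrow> complex^12"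
  assumes f: "continuous_on S f" and pos: "\<And>s. s \<in> S \<Longrightarrow> cmod (lam_form (f s) (f s)) < Bz (f s)"
  shows "continuous_on S (\<lambda>s. corr (f s))"
proof -
  have cl: "continuous_on S (\<lambda>s. lam_form (f s) (f s))" by (rule cont_lam[OF f f])
  have cB: "continuous_on S (\<lambda>s. Bz (f s))" unfolding Bz_def
    by (intro continuous_intros cont_lam f cont_cconj)
  have cR: "continuous_on S (\<lambda>s. Rz (f s))" unfolding Rz_def
    by (intro continuous_intros cB cl)
  have ck: "continuous_on S (\<lambda>s. kap (f s))" unfolding kap_def
    using pos Bz_pos_Rz by (intro continuous_intros cl cB cR) auto
  show ?thesis unfolding corr_def
    by (intro continuous_intros f cont_smult ck cont_cconj)
qed



lemma LW: "lam_form (a + c *s b) (a' + c' *s b') = lam_form a a' + c' * lam_form a b' + c * lam_form b a' + c * c' * lam_form b b'"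
  by (simp add: lam_add_left lam_add_right lam_smult_left lam_smult_right algebra_simps)

lemma LW_inst:
  fixes w :: "complex^12" and S t :: complex
  assumes wd: "lam_form w (cvec d) = t" and Ddd: "lam_form (cvec d) (cvec d) = -2" and dwc: "lam_form (cvec d) (cconj w) = cnj t"
  shows "lam_form (w + (S * t / 2) *s cvec d) (cconj w + (S * cnj t / 2) *s cvec d) = lam_form w (cconj w) + (S * cnj t / 2) * t + (S * t / 2) * cnj t + (S * t / 2) * (S * cnj t / 2) * (-2)"
  apply (subst LW)
  apply (subst wd)
  apply (subst Ddd)
  apply (subst dwc)
  apply (rule refl)
  done

lemma z1d_gen: "lam_form (cvec d) (cvec d) = -2 \<Longrightarrow> lam_form (w + (complex_of_real 1 * lam_form w (cvec d) / 2) *s cvec d) (cvec d) = 0"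
  by (simp add: lam_add_left lam_smult_left)

lemma path_exists:
  fixes d :: "int^12" and w :: "complex^12"
  assumes dd: "lam_form d d = -2" and w: "w \<in> Omega_Lam"
  shows "\<exists>p::real \<Rightarrow> complex^12. continuous_on {0..1} p \<and> p ` {0..1} \<subseteq> Omega_Lam \<and> p 0 = w \<and> p 1 \<in> Omega_dperp d"
proof -
  define t where "t = lam_form w (cvec d)"
  define zp where "zp s = w + (complex_of_real s * t / 2) *s cvec d" for s :: real
  have Ddd: "lam_form (cvec d) (cvec d) = -2" using dd by (simp add: lam_cvec)
  have ww: "lam_form w w = 0" and B0: "Bz w > 0" using w by (auto simp: Omega_Lam_def Bz_def)
  have dw: "lam_form (cvec d) w = t" unfolding t_def by (simp add: lam_sym)
  have dwc: "lam_form (cvec d) (cconj w) = cnj t"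
    unfolding t_def by (metis cconj_cvec lam_cconj lam_sym)
  have wdc: "lam_form (cconj w) (cvec d) = cnj t" using dwc by (simp add: lam_sym)
  have A: "lam_form (zp s) (zp s) = t^2 * complex_of_real (s - s^2/2)" for s
    unfolding zp_def LW ww Ddd dw t_def[symmetric] by (simp add: field_simps power2_eq_square)
  have czp: "cconj (zp s) = cconj w + (complex_of_real s * cnj t / 2) *s cvec d" for s
    unfolding zp_def by (simp add: cconj_add cconj_smult)
  have tt: "t * cnj t = complex_of_real ((cmod t)^2)" by (rule complex_norm_square[symmetric])
  have Bc: "lam_form (zp s) (cconj (zp s)) = complex_of_real (Bz w + (cmod t)^2 * (s - s^2/2))" for s
  proof -
    let ?S = "complex_of_real s"
    have "lam_form (zp s) (cconj (zp s)) = lam_form w (cconj w) + (?S * cnj t / 2) * t + (?S * t / 2) * cnj t + (?S * t / 2) * (?S * cnj t / 2) * (-2)"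
    proof -
      have e: "lam_form (zp s) (cconj (zp s)) = lam_form (w + (?S * t / 2) *s cvec d) (cconj w + (?S * cnj t / 2) *s cvec d)"
        by (subst czp) (simp only: zp_def)
      have wd: "lam_form w (cvec d) = t" unfolding t_def ..
      show ?thesis unfolding e by (rule LW_inst[OF wd Ddd dwc])
    qed
    also have "\<dots> = lam_form w (cconj w) + ?S * (t * cnj t) - (?S^2/2) * (t * cnj t)"
      by (simp add: field_simps power2_eq_square)
    finally have "lam_form (zp s) (cconj (zp s)) = lam_form w (cconj w) + complex_of_real s * (t * cnj t) - complex_of_real (s^2/2) * (t * cnj t)"
      by simp
    moreover have hB: "lam_form w (cconj w) = complex_of_real (Bz w)"
      unfolding Bz_def by (rule lam_herm_real)
    ultimately show ?thesis unfolding tt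
      by (simp add: algebra_simps)
  qed
  have Bzs: "Bz (zp s) = Bz w + (cmod t)^2 * (s - s^2/2)" for s
  proof -
    have "Bz (zp s) = Re (lam_form (zp s) (cconj (zp s)))" by (rule Bz_def)
    then show ?thesis unfolding Bc[of s] by simp
  qed
  have lt: "cmod (lam_form (zp s) (zp s)) < Bz (zp s)" if "s \<in> {0..1}" for s
  proof -
    have "s * s \<le> s * 2" using that by (intro mult_left_mono) auto
    then have q: "s - s^2/2 \<ge> 0" by (simp add: power2_eq_square field_simps)
    have "cmod (lam_form (zp s) (zp s)) = (cmod t)^2 * (s - s^2/2)"
    proof -
      have "cmod (complex_of_real (s - s^2/2)) = s - s^2/2" using q by (simp only: norm_of_real abs_of_nonneg)
      then show ?thesis unfolding A norm_mult norm_power by simp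
    qed
    then show ?thesis unfolding Bzs using B0 by simp
  qed
  define p where "p s = corr (zp s)" for s
  have czc: "continuous_on {0..1} zp" unfolding zp_def
    by (intro continuous_intros cont_smult) auto
  have cp: "continuous_on {0..1} p" unfolding p_def by (rule cont_corr[OF czc lt])
  have pin: "p ` {0..1} \<subseteq> Omega_Lam" unfolding p_def using corr_Omega lt by blast
  have p0: "p 0 = w"
  proof -
    have z0: "zp 0 = w" by (simp add: zp_def vec_eq_iff vector_scalar_mult_def)
    have "kap w = 0" by (simp add: kap_def ww)
    then show ?thesis by (simp add: p_def corr_def z0 vec_eq_iff vector_scalar_mult_def)
  qed
  have z1d: "lam_form (zp 1) (cvec d) = 0"
    unfolding zp_def t_def by (rule z1d_gen[OF Ddd])
  have z1dc: "lam_form (cconj (zp 1)) (cvec d) = 0"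
  proof -
    have "lam_form (cconj (zp 1)) (cvec d) = lam_form (cconj (zp 1)) (cconj (cvec d))" by simp
    also have "\<dots> = cnj (lam_form (zp 1) (cvec d))" by (rule lam_cconj)
    finally show ?thesis unfolding z1d by simp
  qed
  have "lam_form (p 1) (cvec d) = 0"
    unfolding p_def corr_def lam_diff_left lam_smult_left z1d z1dc by simp
  moreover have "p 1 \<in> Omega_Lam" using pin by (meson atLeastAtMost_iff image_subset_iff order_refl zero_le_one)
  ultimately have p1: "p 1 \<in> Omega_dperp d" by (simp add: Omega_dperp_def)
  have "continuous_on {0..1} p \<and> p ` {0..1} \<subseteq> Omega_Lam \<and> p 0 = w \<and> p 1 \<in> Omega_dperp d"
    using cp pin p0 p1 by (intro conjI)
  then show ?thesis by (rule exI[where x=p])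
qed



theorem lemmaA1:
  fixes d :: "int^12"
  assumes "lam_form d d = -2"
  shows "\<forall>h \<in> Oplus_dperp d. \<exists>g \<in> Oplus_Lam. g d = d \<and> (\<forall>x \<in> dperp d. g x = h x)"
proof (intro ballI)
  note dd = assms
  fix h assume hp: "h \<in> Oplus_dperp d"
  then have h: "h \<in> O_dperp d" by (simp add: Oplus_dperp_def)
  from hp obtain M' :: "complex^12^12" where
    M'1: "\<And>x. x \<in> dperp d \<Longrightarrow> M' *v cvec x = cvec (h x)" and
    M'2: "\<And>w. w \<in> Omega_dperp d \<Longrightarrow> connected_component (Omega_dperp d) w (M' *v w)"
    unfolding Oplus_dperp_def by blast
  define g where "g = extd d h"
  define M where "M = matC g"
  have gO: "g \<in> O_Lam" unfolding g_def by (rule ext_O_Lam[OF dd h])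
  have gadd: "\<And>x y. g (x + y) = g x + g y" unfolding g_def by (rule ext_add[OF dd h])
  have Mc: "\<And>x. M *v cvec x = cvec (g x)" unfolding M_def by (rule matC_cvec[OF gadd])
  have iso: "\<And>x y. lam_form (g x) (g y) = lam_form x y" unfolding g_def by (rule ext_iso[OF dd h])
  have Mperp: "\<And>x. x \<in> dperp d \<Longrightarrow> M *v cvec x = cvec (h x)"
    using Mc ext_L[OF dd h] unfolding g_def by simp
  have sub: "Omega_dperp d \<subseteq> Omega_Lam" by (auto simp: Omega_dperp_def)
  have conn: "connected_component Omega_Lam w (M *v w)" if w: "w \<in> Omega_Lam" for w
  proof -
    obtain p :: "real \<Rightarrow> complex^12" where cp: "continuous_on {0..1} p" and pin: "p ` {0..1} \<subseteq> Omega_Lam"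
      and p0: "p 0 = w" and p1: "p 1 \<in> Omega_dperp d"
      using path_exists[OF dd w] by blast
    have i0: "(0::real) \<in> {0..1}" and i1: "(1::real) \<in> {0..1}" by auto
    have C1: "connected_component Omega_Lam w (p 1)"
    proof (rule connected_componentI[of "p ` {0..1}"])
      show "connected (p ` {0..1})" by (rule connected_continuous_image[OF cp connected_Icc])
      show "p ` {0..1} \<subseteq> Omega_Lam" by (rule pin)
      show "w \<in> p ` {0..1}" using p0 i0 by (metis image_eqI)
      show "p 1 \<in> p ` {0..1}" using i1 by (rule imageI)
    qed
    have C2: "connected_component Omega_Lam (p 1) (M' *v p 1)"
      by (rule connected_component_of_subset[OF M'2[OF p1] sub])
    have "lam_form (p 1) (cvec d) = 0" using p1 by (simp add: Omega_dperp_def)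
    moreover have "\<forall>x \<in> dperp d. M *v cvec x = cvec (h x)" using Mperp by blast
    moreover have "\<forall>x \<in> dperp d. M' *v cvec x = cvec (h x)" using M'1 by blast
    ultimately have eq: "M *v p 1 = M' *v p 1" using M_eq_perp[OF dd] by blast
    have C3: "connected_component Omega_Lam (M *v w) (M *v p 1)"
    proof (rule connected_componentI[of "(\<lambda>s. M *v p s) ` {0..1}"])
      show "connected ((\<lambda>s. M *v p s) ` {0..1})"
        by (rule connected_continuous_image[OF cont_mv[OF cp] connected_Icc])
      show "(\<lambda>s. M *v p s) ` {0..1} \<subseteq> Omega_Lam"
        using pin M_Omega[OF Mc iso] by blast
      show "M *v w \<in> (\<lambda>s. M *v p s) ` {0..1}" using p0 i0 by (metis image_eqI)
      show "M *v p 1 \<in> (\<lambda>s. M *v p s) ` {0..1}" using i1 by (rule imageI)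
    qed
    show ?thesis
      using connected_component_trans[OF C1 C2] connected_component_sym[OF C3] eq
      by (metis connected_component_trans)
  qed
  have "g \<in> Oplus_Lam" unfolding Oplus_Lam_def using gO Mc conn by blast
  moreover have "g d = d" unfolding g_def by (rule ext_d[OF dd h])
  moreover have "\<forall>x \<in> dperp d. g x = h x" unfolding g_def using ext_L[OF dd h] by blast
  ultimately show "\<exists>g \<in> Oplus_Lam. g d = d \<and> (\<forall>x \<in> dperp d. g x = h x)" by blast
qed

end
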